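(* Let $k\ge 2$, let $H_0$ be a finite $k$-uniform hypergraph and let $(H_t)_{t\ge0}$ be the ILTH hypergraphs generated from $H_0$. For each $t$ let $A(t)$ be the set of 5-tuples $(u,e_1,v,e_2,w)$ with $u,v,w\in V(H_t)$ distinct, $e_1,e_2\in E(H_t)$ (not necessarily distinct), such that there is some $e_3\in E(H_t)$ with $u\in e_1\cap e_3$, $v\in e_1\cap e_2$ and $w\in e_2\cap e_3$. Then for all nonnegative integers $t$, $|A(t)|=(k^2)^t|A(0)|$.
   Context: A $k$-uniform hypergraph has every hyperedge a $k$-element subset of the vertex set. The ILTH process: given $H_t$, form $H_{t+1}$ by adding for each vertex $x\in V(H_t)$ a new vertex $x'$ (its clone), and taking $E(H_{t+1})=E(H_t)\cup\{(e\setminus\{x\})\cup\{x'\} : e\in E(H_t),\ x\in e\}$. *)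

theory Defs
  imports Main
begin

text \<open>Vertices of the ILTH hypergraphs: original vertices of H_0, and clones.
  The clone of x created in the step from H_t to H_{t+1} is Clone t x,
  which is guaranteed to be a fresh vertex.\<close>
datatype 'a vtx = Base 'a | Clone nat "'a vtx"

type_synonym 'v hgraph = "'v set \<times> 'v set set"

definition hypergraph :: "'v hgraph \<Rightarrow> bool" where
  "hypergraph H \<longleftrightarrow> (\<forall>e\<in>snd H. e \<subseteq> fst H)"

definition k_uniform :: "nat \<Rightarrow> 'v hgraph \<Rightarrow> bool" where
  "k_uniform k H \<longleftrightarrow> hypergraph H \<and> (\<forall>e\<in>snd H. card e = k)"

definition ilth_step :: "nat \<Rightarrow> 'a vtx hgraph \<Rightarrow> 'a vtx hgraph" where
  "ilth_step t H = (fst H \<union> Clone t ` fst H,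
     snd H \<union> {insert (Clone t x) (e - {x}) | e x. e \<in> snd H \<and> x \<in> e})"

fun ilth :: "'a hgraph \<Rightarrow> nat \<Rightarrow> 'a vtx hgraph" where
  "ilth H0 0 = (Base ` fst H0, (\<lambda>e. Base ` e) ` snd H0)"
| "ilth H0 (Suc t) = ilth_step t (ilth H0 t)"

definition tuples5 :: "'v hgraph \<Rightarrow> ('v \<times> 'v set \<times> 'v \<times> 'v set \<times> 'v) set" where
  "tuples5 H = {(u, e1, v, e2, w). u \<in> fst H \<and> v \<in> fst H \<and> w \<in> fst H \<and>
     u \<noteq> v \<and> v \<noteq> w \<and> u \<noteq> w \<and> e1 \<in> snd H \<and> e2 \<in> snd H \<and>
     (\<exists>e3\<in>snd H. u \<in> e1 \<and> u \<in> e3 \<and> v \<in> e1 \<and> v \<in> e2 \<and> w \<in> e2 \<and> w \<in> e3)}"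

end

theory Submission
  imports Defs
begin

definition pr :: "nat \<Rightarrow> 'a vtx \<Rightarrow> 'a vtx" where
  "pr t y = (case y of Clone s x \<Rightarrow> if s = t then x else y | Base b \<Rightarrow> y)"

lemma pr_c[simp]: "pr t (Clone t x) = x"
  by (simp add: pr_def)

definition exx :: "nat \<Rightarrow> 'a vtx set \<Rightarrow> 'a vtx \<Rightarrow> 'a vtx set" where
  "exx t e x = insert (Clone t x) (e - {x})"

locale stp =
  fixes t :: nat and V :: "'a vtx set" and E :: "'a vtx set set" and k :: nat
  assumes fresh: "\<And>x. Clone t x \<notin> V" and sub: "\<And>e. e \<in> E \<Longrightarrow> e \<subseteq> V"
    and ck: "\<And>e. e \<in> E \<Longrightarrow> card e = k" and fin: "finite V"
begin

definition V' where "V' = V \<union> Clone t ` V"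
definition E' where "E' = E \<union> {exx t e x | e x. e \<in> E \<and> x \<in> e}"

lemma step_eq: "ilth_step t (V,E) = (V', E')"
  by (simp add: ilth_step_def V'_def E'_def exx_def)

lemma pr_V: "y \<in> V \<Longrightarrow> pr t y = y"
  using fresh by (cases y) (auto simp: pr_def)

lemma pr_e: "e \<in> E \<Longrightarrow> pr t ` e = e"
  using sub pr_V by (force simp: image_iff)

lemma pr_ex: "e \<in> E \<Longrightarrow> x \<in> e \<Longrightarrow> pr t ` exx t e x = e"
proof -
  assume a: "e \<in> E" "x \<in> e"
  have "pr t ` exx t e x = insert x (pr t ` (e - {x}))" by (simp add: exx_def)
  also have "pr t ` (e - {x}) = e - {x}" using a sub pr_V by (force simp: image_iff)
  finally show ?thesis using a by auto
qed

lemma c_notin: "e \<in> E \<Longrightarrow> Clone t x \<notin> e"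
  using sub fresh by blast

lemma ex_inj: "e \<in> E \<Longrightarrow> e' \<in> E \<Longrightarrow> x \<in> e \<Longrightarrow> x' \<in> e' \<Longrightarrow> exx t e x = exx t e' x' \<Longrightarrow> e = e' \<and> x = x'"
proof -
  assume a: "e \<in> E" "e' \<in> E" "x \<in> e" "x' \<in> e'" "exx t e x = exx t e' x'"
  have "e = e'" using pr_ex[OF a(1,3)] pr_ex[OF a(2,4)] a(5) by simp
  moreover have "Clone t x \<in> exx t e' x'" using a(5) unfolding exx_def by (metis insertI1)
  then have "x = x'" using c_notin[OF a(2), of x] unfolding exx_def by blast
  ultimately show ?thesis by simp
qed

lemma e_ne_ex: "e \<in> E \<Longrightarrow> e \<noteq> exx t e' x"
  using c_notin by (auto simp: exx_def)

lemma E'_sub: "f \<in> E' \<Longrightarrow> f \<subseteq> V'"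
  using sub by (auto simp: E'_def V'_def exx_def)

lemma E'_pr: "f \<in> E' \<Longrightarrow> pr t ` f \<in> E"
  using pr_e pr_ex by (auto simp: E'_def)

lemma lift_clone: "f \<in> E' \<Longrightarrow> Clone t z \<in> f \<Longrightarrow> z \<in> pr t ` f \<and> f = exx t (pr t ` f) z"
proof -
  assume a: "f \<in> E'" "Clone t z \<in> f"
  then obtain e x where ex: "e \<in> E" "x \<in> e" "f = exx t e x"
    using c_notin by (auto simp: E'_def)
  then have "z = x" using a c_notin by (auto simp: exx_def)
  then show ?thesis using ex pr_ex by simp
qed

lemma clone_other: "f \<in> E' \<Longrightarrow> Clone t z \<in> f \<Longrightarrow> p \<in> f \<Longrightarrow> p \<noteq> Clone t z \<Longrightarrow> p \<in> V \<and> p \<in> pr t ` f \<and> p \<noteq> z"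
proof -
  assume a: "f \<in> E'" "Clone t z \<in> f" "p \<in> f" "p \<noteq> Clone t z"
  then have l: "z \<in> pr t ` f" "f = exx t (pr t ` f) z" using lift_clone by auto
  have "pr t ` f \<in> E" using E'_pr a by auto
  then show ?thesis using a l sub by (auto simp: exx_def)
qed

lemma lift_orig: "f \<in> E' \<Longrightarrow> p \<in> f \<Longrightarrow> q \<in> f \<Longrightarrow> p \<in> V \<Longrightarrow> q \<in> V \<Longrightarrow> p \<noteq> q \<Longrightarrow>
   \<exists>z\<in>pr t ` f. z \<noteq> p \<and> f = (if z = q then pr t ` f else exx t (pr t ` f) z)"
proof -
  assume a: "f \<in> E'" "p \<in> f" "q \<in> f" "p \<in> V" "q \<in> V" "p \<noteq> q"
  show ?thesis
  proof (cases "f \<in> E")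
    case True
    then show ?thesis using a pr_e by (intro bexI[of _ q]) auto
  next
    case False
    then obtain e x where ex: "e \<in> E" "x \<in> e" "f = exx t e x"
      using a by (auto simp: E'_def)
    have "x \<noteq> p" "x \<noteq> q" using ex a fresh by (auto simp: exx_def)
    then show ?thesis using ex pr_ex by (intro bexI[of _ x]) auto
  qed
qed

definition Lf where "Lf = (\<lambda>((u,e1,v,e2,w),x,y). if x = u \<and> y = w then (u, exx t e1 v, Clone t v, exx t e2 v, w)
  else ((if x = u then Clone t u else u), (if x = v then e1 else exx t e1 x), v,
        (if y = v then e2 else exx t e2 y), (if y = w then Clone t w else w)))"

lemma memA: "(u,e1,v,e2,w) \<in> tuples5 (V,E) \<longleftrightarrow> u \<in> V \<and> v \<in> V \<and> w \<in> V \<and>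
     u \<noteq> v \<and> v \<noteq> w \<and> u \<noteq> w \<and> e1 \<in> E \<and> e2 \<in> E \<and>
     (\<exists>e3\<in>E. u \<in> e1 \<and> u \<in> e3 \<and> v \<in> e1 \<and> v \<in> e2 \<and> w \<in> e2 \<and> w \<in> e3)"
  by (simp add: tuples5_def)

lemma memA': "(u,e1,v,e2,w) \<in> tuples5 (V',E') \<longleftrightarrow> u \<in> V' \<and> v \<in> V' \<and> w \<in> V' \<and>
     u \<noteq> v \<and> v \<noteq> w \<and> u \<noteq> w \<and> e1 \<in> E' \<and> e2 \<in> E' \<and>
     (\<exists>e3\<in>E'. u \<in> e1 \<and> u \<in> e3 \<and> v \<in> e1 \<and> v \<in> e2 \<and> w \<in> e2 \<and> w \<in> e3)"
  by (simp add: tuples5_def)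

lemma exE': "e \<in> E \<Longrightarrow> x \<in> e \<Longrightarrow> exx t e x \<in> E'"
  by (auto simp: E'_def)

lemma EE': "e \<in> E \<Longrightarrow> e \<in> E'"
  by (auto simp: E'_def)

lemma Lf_in:
  assumes a: "(u,e1,v,e2,w) \<in> tuples5 (V,E)" and x: "x \<in> e1" and y: "y \<in> e2"
  shows "Lf ((u,e1,v,e2,w),x,y) \<in> tuples5 (V',E')"
proof -
  have H: "u \<in> V \<and> v \<in> V \<and> w \<in> V \<and>
     u \<noteq> v \<and> v \<noteq> w \<and> u \<noteq> w \<and> e1 \<in> E \<and> e2 \<in> E \<and>
     (\<exists>e3\<in>E. u \<in> e1 \<and> u \<in> e3 \<and> v \<in> e1 \<and> v \<in> e2 \<and> w \<in> e2 \<and> w \<in> e3)"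
    by (rule iffD1[OF memA a])
  then obtain e3 where e3: "e3 \<in> E" "u \<in> e3" "w \<in> e3" by blast
  have h: "u \<in> V" "v \<in> V" "w \<in> V"
     "u \<noteq> v" "v \<noteq> w" "u \<noteq> w" "e1 \<in> E" "e2 \<in> E" "u \<in> e1" "v \<in> e1" "v \<in> e2" "w \<in> e2"
    using H by blast+
  have VV: "V \<subseteq> V'" "Clone t ` V \<subseteq> V'" by (auto simp: V'_def)
  have nc: "\<And>z p. p \<in> V \<Longrightarrow> Clone t z \<noteq> p" "\<And>z p. p \<in> V \<Longrightarrow> p \<noteq> Clone t z" using fresh by auto
  show ?thesis
  proof (cases "x = u \<and> y = w")
    case True
    have "(u, exx t e1 v, Clone t v, exx t e2 v, w) \<in> tuples5 (V',E')"
      unfolding memA'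
    proof (intro conjI)
      show "u \<in> V'" "Clone t v \<in> V'" "w \<in> V'" using h VV by auto
      show "u \<noteq> Clone t v" "Clone t v \<noteq> w" "u \<noteq> w" using h nc by auto
      show "exx t e1 v \<in> E'" "exx t e2 v \<in> E'" using h exE' by auto
      show "\<exists>e3\<in>E'. u \<in> exx t e1 v \<and> u \<in> e3 \<and> Clone t v \<in> exx t e1 v \<and>
        Clone t v \<in> exx t e2 v \<and> w \<in> exx t e2 v \<and> w \<in> e3"
        using h e3 EE' by (intro bexI[of _ e3]) (auto simp: exx_def)
    qed
    then show ?thesis unfolding Lf_def using True by simp
  next
    case False
    note F = False
    have f1: "(if x = v then e1 else exx t e1 x) \<in> E'" using h x exE' EE' by auto
    have f2: "(if y = v then e2 else exx t e2 y) \<in> E'" using h y exE' EE' by auto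
    have u1: "(if x = u then Clone t u else u) \<in> (if x = v then e1 else exx t e1 x)"
      using h by (auto simp: exx_def)
    have v1: "v \<in> (if x = v then e1 else exx t e1 x)" using h by (auto simp: exx_def)
    have v2: "v \<in> (if y = v then e2 else exx t e2 y)" using h by (auto simp: exx_def)
    have w2: "(if y = w then Clone t w else w) \<in> (if y = v then e2 else exx t e2 y)"
      using h by (auto simp: exx_def)
    have f3: "\<exists>e3'\<in>E'. (if x = u then Clone t u else u) \<in> e3' \<and> (if y = w then Clone t w else w) \<in> e3'"
    proof (cases "x = u")
      case True
      then have "y \<noteq> w" using F by auto
      then show ?thesis using True e3 h exE' by (intro bexI[of _ "exx t e3 u"]) (auto simp: exx_def)
    next
      case False
      show ?thesis
      proof (cases "y = w")
        case True
        then show ?thesis using False e3 h exE' by (intro bexI[of _ "exx t e3 w"]) (auto simp: exx_def)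
      next
        case False2: False
        then show ?thesis using False e3 h EE' by (intro bexI[of _ e3]) auto
      qed
    qed
    have d: "(if x = u then Clone t u else u) \<noteq> v" "v \<noteq> (if y = w then Clone t w else w)"
      "(if x = u then Clone t u else u) \<noteq> (if y = w then Clone t w else w)"
      using h nc F by auto
    have vs: "(if x = u then Clone t u else u) \<in> V'" "v \<in> V'" "(if y = w then Clone t w else w) \<in> V'"
      using h VV by auto
    have LL: "Lf ((u,e1,v,e2,w),x,y) = ((if x = u then Clone t u else u), (if x = v then e1 else exx t e1 x), v,
        (if y = v then e2 else exx t e2 y), (if y = w then Clone t w else w))"
      unfolding Lf_def using F by simp
    show ?thesis unfolding LL memA'
      using f1 f2 u1 v1 v2 w2 f3 d vs by (intro conjI) blast+
  qed
qed

definition Pj where "Pj = (\<lambda>(u,f1,v,f2,w). (pr t u, pr t ` f1, pr t v, pr t ` f2, pr t w))"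

lemma Lf_proj:
  assumes a: "(u,e1,v,e2,w) \<in> tuples5 (V,E)" and x: "x \<in> e1" and y: "y \<in> e2"
  shows "Pj (Lf ((u,e1,v,e2,w),x,y)) = (u,e1,v,e2,w)"
proof -
  have h: "u \<in> V" "v \<in> V" "w \<in> V" "e1 \<in> E" "e2 \<in> E" "v \<in> e1" "v \<in> e2" "u \<in> e1" "w \<in> e2" "u \<noteq> v" "v \<noteq> w"
    using a memA by blast+
  have p: "pr t u = u" "pr t v = v" "pr t w = w" using h pr_V by auto
  have q: "pr t ` e1 = e1" "pr t ` e2 = e2" using h pr_e by auto
  have r: "\<And>z. z \<in> e1 \<Longrightarrow> pr t ` exx t e1 z = e1" "\<And>z. z \<in> e2 \<Longrightarrow> pr t ` exx t e2 z = e2"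
    using h pr_ex by auto
  show ?thesis unfolding Lf_def Pj_def
    by (cases "x = u"; cases "y = w"; cases "x = v"; cases "y = v") (simp_all add: p q r x y h h(10,11)[symmetric])
qed

lemma Lf_inj:
  assumes a: "(u,e1,v,e2,w) \<in> tuples5 (V,E)" and x: "x \<in> e1" "x' \<in> e1" and y: "y \<in> e2" "y' \<in> e2"
    and eq: "Lf ((u,e1,v,e2,w),x,y) = Lf ((u,e1,v,e2,w),x',y')"
  shows "x = x' \<and> y = y'"
proof -
  have h: "u \<in> V" "v \<in> V" "w \<in> V" "e1 \<in> E" "e2 \<in> E" "u \<noteq> v" "v \<noteq> w" "u \<noteq> w"
    using a memA by blast+
  have nc: "\<And>z p. p \<in> V \<Longrightarrow> Clone t z \<noteq> p" using fresh by auto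
  have ne1: "\<And>z. e1 \<noteq> exx t e1 z" "\<And>z. e2 \<noteq> exx t e2 z" using h e_ne_ex by auto
  have ie1: "\<And>z z'. z \<in> e1 \<Longrightarrow> z' \<in> e1 \<Longrightarrow> exx t e1 z = exx t e1 z' \<Longrightarrow> z = z'"
    using h ex_inj by blast
  have ie2: "\<And>z z'. z \<in> e2 \<Longrightarrow> z' \<in> e2 \<Longrightarrow> exx t e2 z = exx t e2 z' \<Longrightarrow> z = z'"
    using h ex_inj by blast
  have s1: "(x = u \<and> y = w) = (x' = u \<and> y' = w)"
    using eq nc[OF h(2)] unfolding Lf_def by (auto split: if_splits)
  show ?thesis
  proof (cases "x = u \<and> y = w")
    case True then show ?thesis using s1 by auto
  next
    case False
    then have F': "\<not> (x' = u \<and> y' = w)" using s1 by auto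
    have e: "(if x = u then Clone t u else u) = (if x' = u then Clone t u else u)"
      "(if x = v then e1 else exx t e1 x) = (if x' = v then e1 else exx t e1 x')"
      "(if y = v then e2 else exx t e2 y) = (if y' = v then e2 else exx t e2 y')"
      "(if y = w then Clone t w else w) = (if y' = w then Clone t w else w)"
      using eq False F' unfolding Lf_def by auto
    have "x = x'"
      using e(2) ne1(1) ie1[OF x] by (auto split: if_splits)
    moreover have "y = y'"
      using e(3) ne1(2) ie2[OF y] by (auto split: if_splits)
    ultimately show ?thesis by simp
  qed
qed

lemma Lf_surj:
  assumes b: "(u',f1,v',f2,w') \<in> tuples5 (V',E')"
  shows "\<exists>u e1 v e2 w x y. (u,e1,v,e2,w) \<in> tuples5 (V,E) \<and> x \<in> e1 \<and> y \<in> e2 \<and>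
           (u',f1,v',f2,w') = Lf ((u,e1,v,e2,w),x,y)"
proof -
  obtain f3 where h: "u' \<in> V'" "v' \<in> V'" "w' \<in> V'" "u' \<noteq> v'" "v' \<noteq> w'" "u' \<noteq> w'"
    "f1 \<in> E'" "f2 \<in> E'" "f3 \<in> E'" "u' \<in> f1" "u' \<in> f3" "v' \<in> f1" "v' \<in> f2" "w' \<in> f2" "w' \<in> f3"
  proof -
    have H: "u' \<in> V' \<and> v' \<in> V' \<and> w' \<in> V' \<and>
     u' \<noteq> v' \<and> v' \<noteq> w' \<and> u' \<noteq> w' \<and> f1 \<in> E' \<and> f2 \<in> E' \<and>
     (\<exists>e3\<in>E'. u' \<in> f1 \<and> u' \<in> e3 \<and> v' \<in> f1 \<and> v' \<in> f2 \<and> w' \<in> f2 \<and> w' \<in> e3)"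
      by (rule iffD1[OF memA' b])
    then obtain f3 where "f3 \<in> E'" "u' \<in> f3" "w' \<in> f3" by blast
    then show ?thesis using that H by blast
  qed
  define e1 where "e1 = pr t ` f1"
  define e2 where "e2 = pr t ` f2"
  define e3 where "e3 = pr t ` f3"
  have E: "e1 \<in> E" "e2 \<in> E" "e3 \<in> E" using h E'_pr e1_def e2_def e3_def by auto
  have pi: "\<And>p f. p \<in> f \<Longrightarrow> pr t p \<in> pr t ` f" by auto
  have cV: "\<And>p. p \<in> V' \<Longrightarrow> p \<notin> V \<Longrightarrow> \<exists>z. p = Clone t z" by (auto simp: V'_def)
  have nc: "\<And>z p. p \<in> V \<Longrightarrow> Clone t z \<noteq> p" using fresh by auto
  show ?thesis
  proof (cases "v' \<in> V")
    case False
    then obtain v where v: "v' = Clone t v" using cV h by blast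
    have l1: "v \<in> e1" "f1 = exx t e1 v" using lift_clone h v e1_def by blast+
    have l2: "v \<in> e2" "f2 = exx t e2 v" using lift_clone h v e2_def by blast+
    have o1: "u' \<in> V" "u' \<in> e1" "u' \<noteq> v" using clone_other[of f1 v u'] h v e1_def by auto
    have o2: "w' \<in> V" "w' \<in> e2" "w' \<noteq> v" using clone_other[of f2 v w'] h v e2_def by auto
    have "w' \<in> e3" "u' \<in> e3" using pi[of w' f3] pi[of u' f3] h pr_V o1 o2 e3_def by auto
    moreover have "v \<in> V" using l1 E sub by auto
    ultimately have A: "(u',e1,v,e2,w') \<in> tuples5 (V,E)"
      unfolding memA using E o1 o2 l1 l2 h by blast
    show ?thesis
      by (rule exI[of _ u'], rule exI[of _ e1], rule exI[of _ v], rule exI[of _ e2], rule exI[of _ w'],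
          rule exI[of _ u'], rule exI[of _ w']) (simp add: A o1 o2 l1 l2 v Lf_def)
  next
    case vV: True
    have pv: "pr t v' = v'" using vV pr_V by auto
    have v12: "v' \<in> e1" "v' \<in> e2" using pi[of v' f1] pi[of v' f2] h pv e1_def e2_def by auto
    show ?thesis
    proof (cases "u' \<in> V")
      case False
      then obtain u where u: "u' = Clone t u" using cV h by blast
      have l1: "u \<in> e1" "f1 = exx t e1 u" using lift_clone h u e1_def by blast+
      have l3: "u \<in> e3" "f3 = exx t e3 u" using lift_clone h u e3_def by blast+
      have o1: "u \<noteq> v'" using clone_other[of f1 u v'] h u e1_def by auto
      have o3: "w' \<in> V" "w' \<in> e3" "w' \<noteq> u" using clone_other[of f3 u w'] h u e3_def by auto
      have w2: "w' \<in> e2" using pi[of w' f2] h pr_V o3 e2_def by auto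
      obtain y where y: "y \<in> e2" "y \<noteq> w'" "f2 = (if y = v' then e2 else exx t e2 y)"
        using lift_orig[of f2 w' v'] h vV o3 e2_def by auto
      have uV: "u \<in> V" using l1 E sub by auto
      have A: "(u,e1,v',e2,w') \<in> tuples5 (V,E)"
        unfolding memA using E o1 o3 l1 l3 h vV v12 w2 uV by auto
      show ?thesis
        by (rule exI[of _ u], rule exI[of _ e1], rule exI[of _ v'], rule exI[of _ e2], rule exI[of _ w'],
          rule exI[of _ u], rule exI[of _ y]) (simp add: A o1 o3 l1 u y Lf_def)
    next
      case uV: True
      have u1: "u' \<in> e1" "u' \<in> e3" using pi[of u' f1] pi[of u' f3] h pr_V uV e1_def e3_def by auto
      obtain x where x: "x \<in> e1" "x \<noteq> u'" "f1 = (if x = v' then e1 else exx t e1 x)"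
        using lift_orig[of f1 u' v'] h vV uV e1_def by auto
      show ?thesis
      proof (cases "w' \<in> V")
        case False
        then obtain w where w: "w' = Clone t w" using cV h by blast
        have l2: "w \<in> e2" "f2 = exx t e2 w" using lift_clone h w e2_def by blast+
        have l3: "w \<in> e3" "f3 = exx t e3 w" using lift_clone h w e3_def by blast+
        have o2: "w \<noteq> v'" using clone_other[of f2 w v'] h w e2_def by auto
        have o3: "u' \<noteq> w" using clone_other[of f3 w u'] h w e3_def by auto
        have wV: "w \<in> V" using l2 E sub by auto
        have A: "(u',e1,v',e2,w) \<in> tuples5 (V,E)"
          unfolding memA using E o2 o3 l2 l3 h vV v12 u1 uV wV by auto
        show ?thesis
          by (rule exI[of _ u'], rule exI[of _ e1], rule exI[of _ v'], rule exI[of _ e2], rule exI[of _ w],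
            rule exI[of _ x], rule exI[of _ w]) (simp add: A o2 o3 l2 x w Lf_def)
      next
        case wV: True
        have w1: "w' \<in> e2" "w' \<in> e3" using pi[of w' f2] pi[of w' f3] h pr_V wV e2_def e3_def by auto
        obtain y where y: "y \<in> e2" "y \<noteq> w'" "f2 = (if y = v' then e2 else exx t e2 y)"
          using lift_orig[of f2 w' v'] h vV wV e2_def by auto
        have A: "(u',e1,v',e2,w') \<in> tuples5 (V,E)"
          unfolding memA using E h vV v12 u1 uV wV w1 by auto
        show ?thesis
          by (rule exI[of _ u'], rule exI[of _ e1], rule exI[of _ v'], rule exI[of _ e2], rule exI[of _ w'],
            rule exI[of _ x], rule exI[of _ y]) (simp add: A x y Lf_def)
      qed
    qed
  qed
qed


lemma finA: "finite (tuples5 (V,E))"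
proof -
  have "tuples5 (V,E) \<subseteq> V \<times> Pow V \<times> V \<times> Pow V \<times> V"
    using sub by (auto simp: tuples5_def)
  moreover have "finite (V \<times> Pow V \<times> V \<times> Pow V \<times> V)" using fin by simp
  ultimately show ?thesis by (rule finite_subset)
qed

lemma step_card: "card (tuples5 (V',E')) = k^2 * card (tuples5 (V,E))"
proof -
  define S where "S = (SIGMA a:tuples5 (V,E). (case a of (u,e1,v,e2,w) \<Rightarrow> e1 \<times> e2))"
  have eq: "tuples5 (V',E') = Lf ` S"
  proof
    show "tuples5 (V',E') \<subseteq> Lf ` S"
    proof
      fix b assume "b \<in> tuples5 (V',E')"
      then obtain u' f1 v' f2 w' where bb: "b = (u',f1,v',f2,w')" "(u',f1,v',f2,w') \<in> tuples5 (V',E')"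
        by (cases b) auto
      then obtain u e1 v e2 w x y where "(u,e1,v,e2,w) \<in> tuples5 (V,E)" "x \<in> e1" "y \<in> e2"
           "(u',f1,v',f2,w') = Lf ((u,e1,v,e2,w),x,y)" using Lf_surj by blast
      then show "b \<in> Lf ` S" unfolding S_def using bb by force
    qed
  next
    show "Lf ` S \<subseteq> tuples5 (V',E')"
      unfolding S_def using Lf_in by force
  qed
  have inj: "inj_on Lf S"
  proof (rule inj_onI)
    fix p q assume p: "p \<in> S" and q: "q \<in> S" and e: "Lf p = Lf q"
    obtain u e1 v e2 w x y where pp: "p = ((u,e1,v,e2,w),x,y)" "(u,e1,v,e2,w) \<in> tuples5 (V,E)" "x \<in> e1" "y \<in> e2"
      using p unfolding S_def by auto
    obtain u' e1' v' e2' w' x' y' where qq: "q = ((u',e1',v',e2',w'),x',y')" "(u',e1',v',e2',w') \<in> tuples5 (V,E)" "x' \<in> e1'" "y' \<in> e2'"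
      using q unfolding S_def by auto
    have "(u,e1,v,e2,w) = (u',e1',v',e2',w')"
      using Lf_proj[OF pp(2-4)] Lf_proj[OF qq(2-4)] e pp(1) qq(1) by metis
    then have same: "u' = u" "e1' = e1" "v' = v" "e2' = e2" "w' = w" by auto
    have "x = x' \<and> y = y'"
      using Lf_inj[OF pp(2) pp(3) _ pp(4)] qq same e pp(1) by auto
    then show "p = q" using pp(1) qq(1) same by simp
  qed
  have fS: "\<forall>a\<in>tuples5 (V,E). finite (case a of (u,e1,v,e2,w) \<Rightarrow> e1 \<times> e2)"
  proof
    fix a assume "a \<in> tuples5 (V,E)"
    then show "finite (case a of (u,e1,v,e2,w) \<Rightarrow> e1 \<times> e2)"
      using sub fin by (auto simp: tuples5_def intro: finite_subset)
  qed
  have cS: "\<forall>a\<in>tuples5 (V,E). card (case a of (u,e1,v,e2,w) \<Rightarrow> e1 \<times> e2) = k^2"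
  proof
    fix a assume "a \<in> tuples5 (V,E)"
    then show "card (case a of (u,e1,v,e2,w) \<Rightarrow> e1 \<times> e2) = k^2"
      using ck by (auto simp: tuples5_def card_cartesian_product power2_eq_square)
  qed
  have "card (tuples5 (V',E')) = card S" using eq inj card_image by metis
  also have "\<dots> = (\<Sum>a\<in>tuples5 (V,E). card (case a of (u,e1,v,e2,w) \<Rightarrow> e1 \<times> e2))"
    unfolding S_def using finA fS by (rule card_SigmaI)
  also have "\<dots> = (\<Sum>a\<in>tuples5 (V,E). k^2)" using cS by simp
  finally show ?thesis by simp
qed

end

lemma ilth_inv:
  assumes fin0: "finite (fst H0)" and ku: "k_uniform k H0"
  shows "finite (fst (ilth H0 t)) \<and> (\<forall>e\<in>snd (ilth H0 t). e \<subseteq> fst (ilth H0 t) \<and> card e = k) \<and>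
     (\<forall>y\<in>fst (ilth H0 t). \<forall>s x. t \<le> s \<longrightarrow> y \<noteq> Clone s x)"
proof (induction t)
  case 0
  have "\<forall>e\<in>snd H0. e \<subseteq> fst H0 \<and> card e = k" using ku by (auto simp: k_uniform_def hypergraph_def)
  moreover have "\<And>e. card (Base ` e) = card e" by (rule card_image) (simp add: inj_on_def)
  ultimately show ?case using fin0 by (auto simp add: card_image inj_on_def)
next
  case (Suc t)
  obtain V E where VE: "ilth H0 t = (V,E)" by (cases "ilth H0 t") auto
  have IH: "finite V" "\<And>e. e \<in> E \<Longrightarrow> e \<subseteq> V" "\<And>e. e \<in> E \<Longrightarrow> card e = k"
     "\<And>y s x. y \<in> V \<Longrightarrow> t \<le> s \<Longrightarrow> y \<noteq> Clone s x"
    using Suc VE by auto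
  have fr: "\<And>x. Clone t x \<notin> V" using IH(4) by blast
  interpret stp t V E k
    by unfold_locales (use IH(1-3) fr in auto)
  have st: "ilth H0 (Suc t) = (V', E')" using VE step_eq by simp
  have c1: "\<And>e x. e \<in> E \<Longrightarrow> x \<in> e \<Longrightarrow> card (exx t e x) = k"
  proof -
    fix e x assume a: "e \<in> E" "x \<in> e"
    have fe: "finite e" using a IH finite_subset by blast
    have "Clone t x \<notin> e - {x}" using c_notin a by auto
    then have "card (exx t e x) = card (e - {x}) + 1" unfolding exx_def using fe by simp
    also have "\<dots> = card e" using a fe card_Suc_Diff1 by fastforce
    finally show "card (exx t e x) = k" using IH a by simp
  qed
  have "finite V'" using IH by (simp add: V'_def)
  moreover have "\<forall>e\<in>E'. e \<subseteq> V' \<and> card e = k" using E'_sub IH c1 by (auto simp: E'_def)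
  moreover have "\<forall>y\<in>V'. \<forall>s x. Suc t \<le> s \<longrightarrow> y \<noteq> Clone s x"
    unfolding V'_def using IH(4) by (metis Suc_leD UnE image_iff vtx.inject(2) Suc_n_not_le_n)
  ultimately show ?case using st by simp
qed

theorem lemma4p7:
  fixes H0 :: "'a hgraph" and k :: nat
  assumes "k \<ge> 2" and "finite (fst H0)" and "k_uniform k H0"
  shows "\<forall>t. card (tuples5 (ilth H0 t)) = (k^2)^t * card (tuples5 (ilth H0 0))"
proof
  fix t show "card (tuples5 (ilth H0 t)) = (k^2)^t * card (tuples5 (ilth H0 0))"
  proof (induction t)
    case 0 then show ?case by simp
  next
    case (Suc t)
    obtain V E where VE: "ilth H0 t = (V,E)" by (cases "ilth H0 t") auto
    have IH: "finite V" "\<And>e. e \<in> E \<Longrightarrow> e \<subseteq> V" "\<And>e. e \<in> E \<Longrightarrow> card e = k"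
       "\<And>y s x. y \<in> V \<Longrightarrow> t \<le> s \<Longrightarrow> y \<noteq> Clone s x"
      using ilth_inv[OF assms(2,3), of t] VE by auto
    have fr: "\<And>x. Clone t x \<notin> V" using IH(4) by blast
    interpret stp t V E k
      by unfold_locales (use IH(1-3) fr in auto)
    have "card (tuples5 (ilth H0 (Suc t))) = k^2 * card (tuples5 (ilth H0 t))"
      using VE step_eq step_card by simp
    then show ?case using Suc by simp
  qed
qed

end
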